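(* Let $n\geq1$ be an integer, $p>1$, $q=pe^{2\pi i/n}$, and let $A=\{a_1,\dots,a_m\}\subset\mathbb R$ be a finite nonempty set. Let $\Lambda_{n,p,A}=\{\sum_{j=1}^\infty x_jq^{-j}\mid x_j\in A\}$, let $f_i(x)=\frac1q(x+a_i)$ for $i=1,\dots,m$, and for $X\subset\mathbb C$ let $\mathcal F_{n,p,A}(X)=\bigcup_{i=1}^m f_i(X)$. Then $\Lambda_{n,p,A}$ is convex if and only if $\mathcal F_{n,p,A}(\mathrm{conv}(\Lambda_{n,p,A}))$ is convex.
   Context: $\mathrm{conv}$ denotes convex hull in $\mathbb C\cong\mathbb R^2$. *)

theory Defs
  imports "HOL-Analysis.Analysis"
begin

definition qbase :: "nat \<Rightarrow> real \<Rightarrow> complex" where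
  "qbase n p = complex_of_real p * cis (2 * pi / real n)"

text \<open>Lambda_{n,p,A}: all sums of x_j q^{-j}, j \<ge> 1, with digits x_j in A.
  Index shift: x k corresponds to x_{k+1}.\<close>
definition Lambda :: "nat \<Rightarrow> real \<Rightarrow> real set \<Rightarrow> complex set" where
  "Lambda n p A = {(\<Sum>k. complex_of_real (x k) / qbase n p ^ (Suc k)) | x. \<forall>k. x k \<in> A}"

definition fmap :: "nat \<Rightarrow> real \<Rightarrow> real \<Rightarrow> complex \<Rightarrow> complex" where
  "fmap n p a z = (z + complex_of_real a) / qbase n p"

definition Fop :: "nat \<Rightarrow> real \<Rightarrow> real set \<Rightarrow> complex set \<Rightarrow> complex set" where
  "Fop n p A X = (\<Union>a\<in>A. fmap n p a ` X)"

end

theory Submission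
  imports Defs
begin

lemma qnorm: "p > 0 \<Longrightarrow> norm (qbase n p) = p"
  by (simp add: qbase_def norm_mult)

lemma qnz: "p > 0 \<Longrightarrow> qbase n p \<noteq> 0"
  by (metis less_irrefl norm_zero qnorm)

lemma summ_norm:
  assumes "p > 1" "\<forall>k. \<bar>x k\<bar> \<le> M"
  shows "summable (\<lambda>k. norm (complex_of_real (x k) / qbase n p ^ Suc k))"
    and "(\<Sum>k. norm (complex_of_real (x k) / qbase n p ^ Suc k)) \<le> (\<Sum>k. M/p * (1/p)^k)"
proof -
  have g: "summable (\<lambda>k. M/p * (1/p)^k)" using assms(1) by (intro summable_mult summable_geometric) auto
  have le: "norm (complex_of_real (x k) / qbase n p ^ Suc k) \<le> M/p*(1/p)^k" for k
  proof -
    have "norm (complex_of_real (x k) / qbase n p ^ Suc k) = \<bar>x k\<bar> / p^Suc k"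
      using assms(1) by (simp add: norm_divide norm_power qnorm del: power_Suc)
    also have "\<dots> \<le> M / p^Suc k" using assms by (intro divide_right_mono) auto
    also have "\<dots> = M/p*(1/p)^k" by (simp add: power_divide)
    finally show ?thesis .
  qed
  show s: "summable (\<lambda>k. norm (complex_of_real (x k) / qbase n p ^ Suc k))"
    by (rule summable_comparison_test[OF _ g]) (use le in auto)
  show "(\<Sum>k. norm (complex_of_real (x k) / qbase n p ^ Suc k)) \<le> (\<Sum>k. M/p * (1/p)^k)"
    by (rule suminf_le[OF le s g])
qed

lemma Lambda_bounded:
  assumes "p > 1" "finite A"
  shows "bounded (Lambda n p A)"
proof -
  define M where "M = Max (insert 0 (abs ` A))"
  have M: "a \<in> A \<Longrightarrow> \<bar>a\<bar> \<le> M" for a unfolding M_def using assms(2) by (intro Max_ge) auto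
  show ?thesis
  proof (rule boundedI)
    fix z assume "z \<in> Lambda n p A"
    then obtain x where z: "z = (\<Sum>k. complex_of_real (x k) / qbase n p ^ Suc k)" and x: "\<forall>k. x k \<in> A"
      unfolding Lambda_def by auto
    have xm: "\<forall>k. \<bar>x k\<bar> \<le> M" using x M by auto
    show "norm z \<le> (\<Sum>k. M/p * (1/p)^k)"
      unfolding z using summable_norm[OF summ_norm(1)[OF assms(1) xm, of n]] summ_norm(2)[OF assms(1) xm, of n]
      by linarith
  qed
qed

lemma fmap_sums:
  assumes "p > 1" "\<forall>k. x k \<in> A" "finite A"
  shows "(\<lambda>k. complex_of_real (case_nat a x k) / qbase n p ^ Suc k) sums fmap n p a (\<Sum>k. complex_of_real (x k) / qbase n p ^ Suc k)"
proof -
  define M where "M = Max (insert 0 (abs ` A))"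
  have M: "a \<in> A \<Longrightarrow> \<bar>a\<bar> \<le> M" for a unfolding M_def using assms(3) by (intro Max_ge) auto
  have xm: "\<forall>k. \<bar>x k\<bar> \<le> M" using assms(2) M by auto
  have "summable (\<lambda>k. complex_of_real (x k) / qbase n p ^ Suc k)"
    using summ_norm(1)[OF assms(1) xm, of n] by (rule summable_norm_cancel)
  then have "(\<lambda>k. complex_of_real (x k) / qbase n p ^ Suc k / qbase n p) sums
      ((\<Sum>k. complex_of_real (x k) / qbase n p ^ Suc k) / qbase n p)"
    by (intro sums_divide summable_sums)
  moreover have e: "(\<lambda>k. complex_of_real (x k) / qbase n p ^ Suc k / qbase n p) =
      (\<lambda>k. complex_of_real (case_nat a x (Suc k)) / qbase n p ^ Suc (Suc k))"
    by (rule ext) (simp only: nat.case divide_divide_eq_left power_Suc[of _ "Suc _"] mult.commute)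
  ultimately have "(\<lambda>k. complex_of_real (case_nat a x (Suc k)) / qbase n p ^ Suc (Suc k)) sums
      ((\<Sum>k. complex_of_real (x k) / qbase n p ^ Suc k) / qbase n p)"
    by (simp only: e)
  then have "(\<lambda>k. complex_of_real (case_nat a x k) / qbase n p ^ Suc k) sums
      ((\<Sum>k. complex_of_real (x k) / qbase n p ^ Suc k) / qbase n p +
       complex_of_real (case_nat a x 0) / qbase n p ^ Suc 0)"
    by (rule sums_Suc_iff[where f="\<lambda>k. complex_of_real (case_nat a x k) / qbase n p ^ Suc k", THEN iffD1])
  then show ?thesis
    by (simp add: fmap_def add_divide_distrib)
qed

lemma Lambda_I:
  assumes "\<forall>k. x k \<in> A" "z = (\<Sum>k. complex_of_real (x k) / qbase n p ^ Suc k)"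
  shows "z \<in> Lambda n p A"
  unfolding Lambda_def using assms by auto

lemma Lambda_E:
  assumes "z \<in> Lambda n p A"
  obtains x where "z = (\<Sum>k. complex_of_real (x k) / qbase n p ^ Suc k)" "\<forall>k. x k \<in> A"
  using assms unfolding Lambda_def by auto

lemma F_sub:
  assumes "p > 1" "finite A" "a \<in> A" "z \<in> Lambda n p A"
  shows "fmap n p a z \<in> Lambda n p A"
proof -
  obtain x where z: "z = (\<Sum>k. complex_of_real (x k) / qbase n p ^ Suc k)" and x: "\<forall>k. x k \<in> A"
    using assms(4) by (rule Lambda_E)
  have y: "\<forall>k. case_nat a x k \<in> A" using x assms(3) by (simp split: nat.split)
  have "fmap n p a z = (\<Sum>k. complex_of_real (case_nat a x k) / qbase n p ^ Suc k)"
    using sums_unique[OF fmap_sums[OF assms(1) x assms(2), of a n]] z by simp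
  then show ?thesis by (rule Lambda_I[OF y])
qed

lemma sub_F:
  assumes "p > 1" "finite A" "z \<in> Lambda n p A"
  shows "\<exists>a\<in>A. \<exists>w\<in>Lambda n p A. z = fmap n p a w"
proof -
  obtain x where z: "z = (\<Sum>k. complex_of_real (x k) / qbase n p ^ Suc k)" and x: "\<forall>k. x k \<in> A"
    using assms(3) by (rule Lambda_E)
  have x': "\<forall>k. (x \<circ> Suc) k \<in> A" using x by simp
  have e: "case_nat (x 0) (x \<circ> Suc) = x" by (rule ext) (simp split: nat.split)
  have "z = fmap n p (x 0) (\<Sum>k. complex_of_real ((x \<circ> Suc) k) / qbase n p ^ Suc k)"
    using sums_unique[OF fmap_sums[OF assms(1) x' assms(2), of "x 0" n]] z unfolding e by simp
  moreover have "(\<Sum>k. complex_of_real ((x \<circ> Suc) k) / qbase n p ^ Suc k) \<in> Lambda n p A"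
    by (rule Lambda_I[OF x' refl])
  moreover have "x 0 \<in> A" using x by simp
  ultimately show ?thesis by (intro bexI)
qed

lemma Fop_eq:
  assumes "p > 1" "finite A"
  shows "Fop n p A (Lambda n p A) = Lambda n p A"
proof
  show "Fop n p A (Lambda n p A) \<subseteq> Lambda n p A"
    unfolding Fop_def using F_sub[OF assms] by (auto simp del: fmap_def)
  show "Lambda n p A \<subseteq> Fop n p A (Lambda n p A)"
  proof
    fix z assume "z \<in> Lambda n p A"
    then obtain a w where "a \<in> A" "w \<in> Lambda n p A" "z = fmap n p a w" using sub_F[OF assms] by metis
    then show "z \<in> Fop n p A (Lambda n p A)" unfolding Fop_def by blast
  qed
qed

lemma fixed_sub:
  assumes "p > 1" "finite A" "bounded K"
    and K: "\<forall>z\<in>K. \<exists>a\<in>A. \<exists>w\<in>K. z = fmap n p a w"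
    and "z \<in> K"
  shows "z \<in> Lambda n p A"
proof -
  let ?q = "qbase n p"
  have q0: "?q \<noteq> 0" using qnz assms(1) by simp
  obtain g h where gh: "\<forall>z\<in>K. g z \<in> A \<and> h z \<in> K \<and> z = fmap n p (g z) (h z)"
    using K by metis
  define zs where "zs N = (h ^^ N) z" for N
  define x where "x k = g (zs k)" for k
  have zsK: "zs N \<in> K" for N by (induction N) (use assms(5) gh in \<open>auto simp: zs_def\<close>)
  have zsS: "zs (Suc N) = h (zs N)" for N by (simp add: zs_def)
  have xA: "\<forall>k. x k \<in> A" using zsK gh x_def by auto
  have rec: "z = (\<Sum>k<N. complex_of_real (x k) / ?q ^ Suc k) + zs N / ?q ^ N" for N
  proof (induction N)
    case 0 then show ?case by (simp add: zs_def)
  next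
    case (Suc N)
    have "zs N = (zs (Suc N) + complex_of_real (x N)) / ?q"
      using gh zsK[of N] unfolding zsS x_def fmap_def by auto
    then have "zs N / ?q ^ N = complex_of_real (x N) / ?q ^ Suc N + zs (Suc N) / ?q ^ Suc N"
      using q0 by (simp add: field_simps)
    then show ?case using Suc by simp
  qed
  obtain B where B: "\<And>w. w \<in> K \<Longrightarrow> norm w \<le> B" using assms(3) bounded_iff by blast
  have t0: "(\<lambda>N. zs N / ?q ^ N) \<longlonglongrightarrow> 0"
  proof (rule Lim_null_comparison)
    show "\<forall>\<^sub>F N in sequentially. norm (zs N / ?q ^ N) \<le> B * (1/p)^N"
    proof (intro always_eventually allI)
      fix N
      have "norm (zs N / ?q ^ N) = norm (zs N) / p ^ N"
        using assms(1) by (simp add: norm_divide norm_power qnorm)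
      also have "\<dots> \<le> B / p^N" using B[OF zsK[of N]] assms(1) by (intro divide_right_mono) auto
      finally show "norm (zs N / ?q ^ N) \<le> B * (1/p)^N" by (simp add: power_divide)
    qed
    show "(\<lambda>N. B * (1/p)^N) \<longlonglongrightarrow> 0" using assms(1)
      by (intro tendsto_mult_right_zero LIMSEQ_power_zero) auto
  qed
  define M where "M = Max (insert 0 (abs ` A))"
  have M: "a \<in> A \<Longrightarrow> \<bar>a\<bar> \<le> M" for a unfolding M_def using assms(2) by (intro Max_ge) auto
  have xm: "\<forall>k. \<bar>x k\<bar> \<le> M" using xA M by auto
  have sm: "summable (\<lambda>k. complex_of_real (x k) / ?q ^ Suc k)"
    using summ_norm(1)[OF assms(1) xm, of n] by (rule summable_norm_cancel)
  have "(\<lambda>N. (\<Sum>k<N. complex_of_real (x k) / ?q ^ Suc k) + zs N / ?q ^ N) \<longlonglongrightarrow>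
        (\<Sum>k. complex_of_real (x k) / ?q ^ Suc k) + 0"
    by (intro tendsto_add summable_LIMSEQ sm t0)
  then have "(\<lambda>N. z) \<longlonglongrightarrow> (\<Sum>k. complex_of_real (x k) / ?q ^ Suc k)"
    using rec by simp
  then have "z = (\<Sum>k. complex_of_real (x k) / ?q ^ Suc k)" using LIMSEQ_const_iff by blast
  then show ?thesis unfolding Lambda_def using xA by blast
qed

theorem lemma4p5:
  fixes n :: nat and p :: real and A :: "real set"
  assumes "n \<ge> 1" and "p > 1" and "finite A" and "A \<noteq> {}"
  shows "convex (Lambda n p A) \<longleftrightarrow> convex (Fop n p A (convex hull (Lambda n p A)))"
proof
  assume "convex (Lambda n p A)"
  then have "convex hull (Lambda n p A) = Lambda n p A" by (rule convex_hull_eq[THEN iffD2])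
  then show "convex (Fop n p A (convex hull (Lambda n p A)))"
    using Fop_eq[OF assms(2,3)] \<open>convex (Lambda n p A)\<close> by simp
next
  let ?L = "Lambda n p A" let ?K = "convex hull ?L"
  assume c: "convex (Fop n p A ?K)"
  have "?L \<subseteq> Fop n p A ?K"
    using Fop_eq[OF assms(2,3)] hull_subset[of ?L convex] unfolding Fop_def by blast
  then have KF: "?K \<subseteq> Fop n p A ?K" using c by (intro hull_minimal)
  have bK: "bounded ?K" using Lambda_bounded[OF assms(2,3)] by (rule bounded_convex_hull)
  have "\<forall>z\<in>?K. \<exists>a\<in>A. \<exists>w\<in>?K. z = fmap n p a w" using KF unfolding Fop_def by blast
  then have "?K \<subseteq> ?L" using fixed_sub[OF assms(2,3) bK] by blast
  then have "?K = ?L" using hull_subset[of ?L convex] by blast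
  then show "convex ?L" by (metis convex_convex_hull)
qed

end
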